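(* Assume $S$ is symmetric, let $k\ge0$ with $F_{k+1}\ne0$, and let $M_k:=\sum_{\ell=0}^k[(1-A_k)^{-1}]_{0,\ell}$. Then $$M_k=\frac{\sum_{\ell=0}^{\lfloor k/2\rfloor}F^+_{k,\ell}}{F^+_{k+1}}.$$
   Context: Let $S$ be a finite set of integers with $a:=\max S\ge1$; $S$ is called symmetric if $-S=S$ and $\omega_{-s}=\omega_s$ for all $s\in S$, where each $s\in S$ carries a weight $\omega_s$ in a field $K$ of characteristic $0$; set $\omega_s:=0$ for $s\notin S$. For $k\ge0$, $A_k$ is the $(k+1)\times(k+1)$ matrix with rows and columns indexed by $0,\dots,k$ whose $(i,j)$ entry is $\omega_{j-i}$; $F_k:=\det(1-A_{k-1})$ for $k\ge1$. ($M_k$ is, for formal weights, the generating function of meanders with steps in $S$ of height at most $k$.) For $k\ge0$, $A_k^+$ is the matrix with rows and columns indexed by the integers $0\le i,j\le k/2$ and entries $\omega_{j-i}+\omega_{k-j-i}$ if $j<k/2$ and $\omega_{j-i}$ if $j=k/2$. The determinant of an empty matrix is $1$. Put $F^+_k:=\det(1-A^+_{k-1})$ for $k\ge1$. For $0\le\ell\le k/2$, $F^+_{k,\ell}$ is the $(\ell,0)$ cofactor of $1-A_k^+$, i.e. $(-1)^\ell$ times the determinant of $1-A_k^+$ with row $\ell$ and column $0$ deleted. *)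

theory Defs
  imports "Jordan_Normal_Form.Gauss_Jordan_Elimination" "Jordan_Normal_Form.Determinant"
begin

text \<open>Weights are a function w :: int => 'a (w s = 0 outside S).
  A_k is the (k+1) x (k+1) matrix with (i,j) entry w (j - i).\<close>
definition A_mat :: "(int \<Rightarrow> 'a::field) \<Rightarrow> nat \<Rightarrow> 'a mat" where
  "A_mat w k = mat (k+1) (k+1) (\<lambda>(i,j). w (int j - int i))"

definition F_det :: "(int \<Rightarrow> 'a::field) \<Rightarrow> nat \<Rightarrow> 'a" where
  "F_det w k = det (1\<^sub>m k - A_mat w (k - 1))"

text \<open>A_k^+ : indices 0 <= i,j <= k/2, i.e. i,j < k div 2 + 1; the condition j < k/2 is 2*j < k.\<close>
definition Aplus_mat :: "(int \<Rightarrow> 'a::field) \<Rightarrow> nat \<Rightarrow> 'a mat" where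
  "Aplus_mat w k = mat (k div 2 + 1) (k div 2 + 1)
     (\<lambda>(i,j). if 2 * j < k then w (int j - int i) + w (int k - int j - int i)
              else w (int j - int i))"

definition Fplus :: "(int \<Rightarrow> 'a::field) \<Rightarrow> nat \<Rightarrow> 'a" where
  "Fplus w k = det (1\<^sub>m ((k - 1) div 2 + 1) - Aplus_mat w (k - 1))"

definition Fplus_cof :: "(int \<Rightarrow> 'a::field) \<Rightarrow> nat \<Rightarrow> nat \<Rightarrow> 'a" where
  "Fplus_cof w k l = cofactor (1\<^sub>m (k div 2 + 1) - Aplus_mat w k) l 0"

end

theory Submission
  imports Defs
begin

definition bb :: "(int \<Rightarrow> 'a::field) \<Rightarrow> nat \<Rightarrow> nat \<Rightarrow> 'a" where
  "bb w i j = (if i = j then 1 else 0) - w (int j - int i)"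

definition cc :: "(int \<Rightarrow> 'a::field) \<Rightarrow> nat \<Rightarrow> nat \<Rightarrow> nat \<Rightarrow> 'a" where
  "cc w k i j = (if i = j then 1 else 0) -
     (if 2 * j < k then w (int j - int i) + w (int k - int j - int i) else w (int j - int i))"

lemma B_entry: "i < k+1 \<Longrightarrow> j < k+1 \<Longrightarrow> (1\<^sub>m (k+1) - A_mat w k) $$ (i,j) = bb w i j"
  unfolding A_mat_def bb_def by simp

lemma C_entry: "i < k div 2+1 \<Longrightarrow> j < k div 2+1 \<Longrightarrow>
   (1\<^sub>m (k div 2+1) - Aplus_mat w k) $$ (i,j) = cc w k i j"
  unfolding Aplus_mat_def cc_def by simp

lemma B_carrier: "1\<^sub>m (k+1) - A_mat w k \<in> carrier_mat (k+1) (k+1)"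
  unfolding A_mat_def carrier_mat_def by simp

lemma C_carrier: "1\<^sub>m (k div 2+1) - Aplus_mat w k \<in> carrier_mat (k div 2+1) (k div 2+1)"
  unfolding Aplus_mat_def carrier_mat_def by simp

lemma mulvec_sum: assumes "A \<in> carrier_mat n n" "v \<in> carrier_vec n" "i < n"
  shows "(A *\<^sub>v v) $ i = (\<Sum>j<n. A $$ (i,j) * v $ j)"
  using assms by (auto simp: scalar_prod_def atLeast0LessThan)

lemma bb_refl: assumes sym: "\<And>s. w (- s) = w s" and "i \<le> k" "j \<le> k"
  shows "bb w (k-i) (k-j) = bb w i j"
proof -
  have "int (k-j) - int (k-i) = - (int j - int i)" using assms by auto
  moreover have "w (int i - int j) = w (int j - int i)" using sym[of "int j - int i"] by simp
  ultimately show ?thesis unfolding bb_def using assms by auto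
qed

lemma reflect: assumes sym: "\<And>s. w (- s) = w s" and "i \<le> k"
  shows "(\<Sum>j=0..k. bb w i j * z (k-j)) = (\<Sum>j=0..k. bb w (k-i) j * z j)"
proof -
  have "(\<Sum>j=0..k. bb w (k-i) j * z j) = (\<Sum>j=0..k. bb w (k-i) (k-j) * z (k-j))"
    by (subst sum.atLeastAtMost_rev) simp
  also have "\<dots> = (\<Sum>j=0..k. bb w i j * z (k-j))"
    by (rule sum.cong) (use assms bb_refl[where w=w, OF sym] in auto)
  finally show ?thesis by simp
qed

lemma split: assumes zs: "\<And>j. j \<le> k \<Longrightarrow> z (k-j) = z j" and i: "i \<le> k div 2"
  shows "(\<Sum>j=0..k. bb w i j * z j) = (\<Sum>j=0..k div 2. cc w k i j * z j)"
proof -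
  let ?m = "k div 2"
  have "{0..k} = {0..?m} \<union> {?m+1..k}" by auto
  then have "(\<Sum>j=0..k. bb w i j * z j) = (\<Sum>j=0..?m. bb w i j * z j) + (\<Sum>j=?m+1..k. bb w i j * z j)"
    by (simp add: sum.union_disjoint)
  also have "(\<Sum>j=?m+1..k. bb w i j * z j) = (\<Sum>j\<in>{j\<in>{0..?m}. 2*j<k}. bb w i (k-j) * z j)"
    by (rule sum.reindex_bij_witness[where i="\<lambda>j. k - j" and j="\<lambda>j. k - j"]) (use zs in auto)
  also have "\<dots> = (\<Sum>j=0..?m. if 2*j<k then bb w i (k-j) * z j else 0)"
    by (rule sum.mono_neutral_cong_left) auto
  also have "(\<Sum>j=0..?m. bb w i j * z j) + \<dots> = (\<Sum>j=0..?m. cc w k i j * z j)"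
    unfolding sum.distrib[symmetric]
    by (rule sum.cong) (use i in \<open>auto simp: bb_def cc_def algebra_simps of_nat_diff\<close>)
  finally show ?thesis .
qed

theorem mainTheorem12:
  fixes S :: "int set" and w :: "int \<Rightarrow> 'a::field_char_0" and k :: nat
  assumes "finite S" and "S \<noteq> {}" and "Max S \<ge> 1"
    and "\<And>s. s \<notin> S \<Longrightarrow> w s = 0"
    and "uminus ` S = S" and "\<And>s. s \<in> S \<Longrightarrow> w (- s) = w s"
    and "F_det w (k + 1) \<noteq> 0"
  shows "(\<Sum>l = 0..k. the (mat_inverse (1\<^sub>m (k+1) - A_mat w k)) $$ (0, l))
         = (\<Sum>l = 0..k div 2. Fplus_cof w k l) / Fplus w (k + 1)"
proof -
  have sym: "w (- s) = w s" for s
  proof (cases "s \<in> S")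
    case True then show ?thesis using assms(6) by auto
  next
    case False
    have "- s \<notin> S"
    proof
      assume "- s \<in> S"
      then have "- (- s) \<in> uminus ` S" by blast
      then show False using False assms(5) by simp
    qed
    then show ?thesis using False assms(4) by simp
  qed
  define m where "m = k div 2"
  define B where "B = 1\<^sub>m (k+1) - A_mat w k"
  define C where "C = 1\<^sub>m (m+1) - Aplus_mat w k"
  have Bc: "B \<in> carrier_mat (k+1) (k+1)" unfolding B_def by (rule B_carrier)
  have Cc: "C \<in> carrier_mat (m+1) (m+1)" unfolding C_def m_def by (rule C_carrier)
  have Be: "B $$ (i,j) = bb w i j" if "i \<le> k" "j \<le> k" for i j
    unfolding B_def using that by (intro B_entry) auto
  have Ce: "C $$ (i,j) = cc w k i j" if "i \<le> m" "j \<le> m" for i j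
    unfolding C_def m_def using that by (intro C_entry) (auto simp: m_def)
  have detB: "det B \<noteq> 0" using assms(7) unfolding F_det_def B_def by simp
  have BU: "B \<in> Units (ring_mat TYPE('a) (k+1) ())"
    by (rule det_non_zero_imp_unit[OF Bc detB])
  obtain Binv where inv: "mat_inverse B = Some Binv"
    using mat_inverse(1)[OF Bc, of "()"] BU by (cases "mat_inverse B") auto
  note inv2 = mat_inverse(2)[OF Bc inv]
  have lt: "{..<k+1} = {0..k}" by auto
  have ltm: "{..<m+1} = {0..m}" by auto
  define x where "x j = (\<Sum>l=0..k. Binv $$ (j,l))" for j
  have eB: "(\<Sum>j=0..k. bb w i j * Binv $$ (j,l)) = (if i = l then 1 else 0)"
    if "i \<le> k" "l \<le> k" for i l
  proof -
    have e1: "(B * Binv) $$ (i,l) = (\<Sum>j<k+1. B $$ (i,j) * Binv $$ (j,l))"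
      using Bc inv2[THEN conjunct2, THEN conjunct2] that by (simp add: scalar_prod_def atLeast0LessThan)
    have e2: "(\<Sum>j<k+1. B $$ (i,j) * Binv $$ (j,l)) = (\<Sum>j=0..k. bb w i j * Binv $$ (j,l))"
      unfolding lt by (rule sum.cong) (use that Be in auto)
    have e3: "(B * Binv) $$ (i,l) = (if i = l then 1 else 0)" using inv2 that by simp
    from e1 e2 e3 show ?thesis by metis
  qed
  have hx: "(\<Sum>j=0..k. bb w i j * x j) = 1" if "i \<le> k" for i
  proof -
    have "(\<Sum>j=0..k. bb w i j * x j) = (\<Sum>l=0..k. \<Sum>j=0..k. bb w i j * Binv $$ (j,l))"
      unfolding x_def sum_distrib_left by (rule sum.swap)
    also have "\<dots> = (\<Sum>l=0..k. if i = l then 1 else 0)"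
      by (rule sum.cong) (use that eB in auto)
    also have "\<dots> = 1" using that by simp
    finally show ?thesis .
  qed
  have uniq: "y j = 0" if hy: "\<And>i. i \<le> k \<Longrightarrow> (\<Sum>j=0..k. bb w i j * y j) = 0"
    and j: "j \<le> k" for y j
  proof (rule ccontr)
    assume nz: "y j \<noteq> 0"
    define v where "v = vec (k+1) y"
    have vc: "v \<in> carrier_vec (k+1)" unfolding v_def by simp
    have "v \<noteq> 0\<^sub>v (k+1)"
    proof
      assume "v = 0\<^sub>v (k+1)"
      then have "v $ j = 0" using j by simp
      then show False using nz j unfolding v_def by simp
    qed
    moreover have "B *\<^sub>v v = 0\<^sub>v (k+1)"
    proof (rule eq_vecI)
      fix i assume i: "i < dim_vec (0\<^sub>v (k+1) :: 'a vec)"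
      have "(B *\<^sub>v v) $ i = (\<Sum>j<k+1. B $$ (i,j) * v $ j)"
        using i by (intro mulvec_sum[OF Bc vc]) simp
      also have "\<dots> = (\<Sum>j=0..k. bb w i j * y j)"
        unfolding lt by (rule sum.cong) (use i Be in \<open>auto simp: v_def\<close>)
      also have "\<dots> = 0" using i hy by simp
      finally show "(B *\<^sub>v v) $ i = 0\<^sub>v (k+1) $ i" using i by simp
    qed (use Bc in simp)
    ultimately have "det B = 0" using det_0_iff_vec_prod_zero_field[OF Bc] vc by blast
    then show False using detB by simp
  qed
  have xsym: "x (k-j) = x j" if "j \<le> k" for j
  proof -
    have "x (k-j) - x j = 0"
    proof (rule uniq[where y="\<lambda>j. x (k-j) - x j"])
      fix i assume i: "i \<le> k"
      have "(\<Sum>j=0..k. bb w i j * (x (k-j) - x j)) =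
          (\<Sum>j=0..k. bb w i j * x (k-j)) - (\<Sum>j=0..k. bb w i j * x j)"
        by (simp add: algebra_simps sum_subtractf)
      also have "\<dots> = (\<Sum>j=0..k. bb w (k-i) j * x j) - 1"
        using reflect[where w=w, OF sym i] hx[OF i] by simp
      also have "\<dots> = 0" using hx[of "k-i"] by simp
      finally show "(\<Sum>j=0..k. bb w i j * (x (k-j) - x j)) = 0" .
    qed (use that in simp)
    then show ?thesis by simp
  qed
  have hc: "(\<Sum>j=0..m. cc w k i j * x j) = 1" if "i \<le> m" for i
    using split[of k x i w] xsym that hx[of i] unfolding m_def by simp
  have detC: "det C \<noteq> 0"
  proof
    assume "det C = 0"
    then obtain v where vc: "v \<in> carrier_vec (m+1)" and vnz: "v \<noteq> 0\<^sub>v (m+1)"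
      and Cv: "C *\<^sub>v v = 0\<^sub>v (m+1)"
      using det_0_iff_vec_prod_zero_field[OF Cc] by blast
    define z where "z j = v $ (if j \<le> m then j else k - j)" for j
    have zs: "z (k-j) = z j" if "j \<le> k" for j
    proof -
      have "k - j \<le> k div 2 \<Longrightarrow> j \<le> k div 2 \<Longrightarrow> k - j = j" using that by presburger
      then show ?thesis using that unfolding z_def m_def by auto
    qed
    have low: "(\<Sum>j=0..k. bb w i j * z j) = 0" if i: "i \<le> m" for i
    proof -
      have "(\<Sum>j=0..k. bb w i j * z j) = (\<Sum>j=0..m. cc w k i j * z j)"
        using split[of k z i w] zs i unfolding m_def by simp
      also have "\<dots> = (\<Sum>j<m+1. C $$ (i,j) * v $ j)"
        unfolding ltm by (rule sum.cong) (use i Ce in \<open>auto simp: z_def\<close>)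
      also have "\<dots> = (C *\<^sub>v v) $ i"
        using i by (intro mulvec_sum[OF Cc vc, symmetric]) simp
      also have "\<dots> = 0" using Cv i by simp
      finally show ?thesis .
    qed
    have allz: "(\<Sum>j=0..k. bb w i j * z j) = 0" if i: "i \<le> k" for i
    proof (cases "i \<le> m")
      case True then show ?thesis by (rule low)
    next
      case False
      have "(\<Sum>j=0..k. bb w i j * z j) = (\<Sum>j=0..k. bb w i j * z (k-j))"
        by (rule sum.cong) (use zs in auto)
      also have "\<dots> = (\<Sum>j=0..k. bb w (k-i) j * z j)"
        by (rule reflect[where w=w, OF sym i])
      also have "\<dots> = 0" using False by (intro low) (auto simp: m_def)
      finally show ?thesis .
    qed
    have "v = 0\<^sub>v (m+1)"
    proof (rule eq_vecI)
      fix j assume j: "j < dim_vec (0\<^sub>v (m+1) :: 'a vec)"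
      then have "j \<le> k" unfolding m_def by simp
      then have "z j = 0" using uniq[of z j] allz by blast
      then show "v $ j = 0\<^sub>v (m+1) $ j" using j unfolding z_def by simp
    qed (use vc in simp)
    then show False using vnz by simp
  qed
  have adj: "adj_mat C * C = det C \<cdot>\<^sub>m 1\<^sub>m (m+1)" by (rule adj_mat(3)[OF Cc])
  have eA: "(\<Sum>i=0..m. cofactor C i 0 * cc w k i j) = (if j = 0 then det C else 0)"
    if j: "j \<le> m" for j
  proof -
    have "(adj_mat C * C) $$ (0,j) = (\<Sum>i<m+1. adj_mat C $$ (0,i) * C $$ (i,j))"
      using Cc adj_mat(1)[OF Cc] j by (simp add: scalar_prod_def atLeast0LessThan)
    also have "\<dots> = (\<Sum>i=0..m. cofactor C i 0 * cc w k i j)"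
      unfolding ltm by (rule sum.cong) (use j Ce Cc in \<open>auto simp: adj_mat_def\<close>)
    finally show ?thesis using adj j by (cases "j = 0") auto
  qed
  have num: "(\<Sum>l=0..k div 2. Fplus_cof w k l) = det C * x 0"
  proof -
    have "(\<Sum>l=0..k div 2. Fplus_cof w k l) = (\<Sum>i=0..m. cofactor C i 0 * (\<Sum>j=0..m. cc w k i j * x j))"
      unfolding Fplus_cof_def C_def m_def using hc unfolding m_def by simp
    also have "\<dots> = (\<Sum>j=0..m. (\<Sum>i=0..m. cofactor C i 0 * cc w k i j) * x j)"
      unfolding sum_distrib_left sum_distrib_right by (subst sum.swap) (simp add: mult.assoc)
    also have "\<dots> = (\<Sum>j=0..m. (if j = 0 then det C else 0) * x j)"
      by (rule sum.cong) (use eA in auto)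
    also have "\<dots> = (\<Sum>j=0..m. if j = 0 then det C * x 0 else 0)"
      by (rule sum.cong) auto
    also have "\<dots> = det C * x 0" by simp
    finally show ?thesis .
  qed
  have den: "Fplus w (k+1) = det C" unfolding Fplus_def C_def m_def by simp
  have lhs: "(\<Sum>l = 0..k. the (mat_inverse (1\<^sub>m (k+1) - A_mat w k)) $$ (0, l)) = x 0"
    unfolding x_def B_def[symmetric] inv by simp
  show ?thesis unfolding lhs num den using detC by simp
qed

end
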